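(* Let $q\ge2$ and $\ell\ge3$ be integers, $n$ a positive integer, $P=\lceil \frac{\log_q n+\log_q\log_q n}{2}\rceil$, and $a\in[0,P-1]$. Then the code $$\mathcal{C}=\{\boldsymbol{x}\in\Sigma_q^n:\ \boldsymbol{x}\text{ is good},\ \mathrm{Inv}(\boldsymbol{x})\equiv a\pmod P\}$$ is an $\ell$-read $(n,3)_q$-code. Moreover, there exists $a\in[0,P-1]$ such that $r(\mathcal{C})\le \log_q P+o(1)=\log_q\log_q n-\log_q 2+o(1)$ as $n\to\infty$.
   Context: $\Sigma_q=\{0,\dots,q-1\}$, $[i,j]=\{i,\dots,j\}$. For $\boldsymbol{x}\in\Sigma_q^n$, $x[i]$ is its $i$-th entry, with $x[i]=0$ for $i\notin[1,n]$, and $\boldsymbol{x}[i,j]=(x[i],\dots,x[j])$. The $\ell$-read vector of $\boldsymbol{x}$ is the length-$(n+\ell-1)$ vector $\mathcal{R}_\ell(\boldsymbol{x})$ whose $i$-th entry is the multiset $\{\{x[i-\ell+1],\dots,x[i]\}\}$. A set $\mathcal{C}\subseteq\Sigma_q^n$ is an $\ell$-read $(n,d)_q$-code if $d_H(\mathcal{R}_\ell(\boldsymbol{x}),\mathcal{R}_\ell(\boldsymbol{y}))\ge d$ for all distinct $\boldsymbol{x},\boldsymbol{y}\in\mathcal{C}$ ($d_H$ = Hamming distance). Redundancy: $r(\mathcal{C})=n-\log_q|\mathcal{C}|$. $\mathrm{Inv}(\boldsymbol{x})=|\{(i,j):1\le i<j\le n,\ x[i]>x[j]\}|$. A sequence is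 alternating if it is of the form $abab\cdots$ (of any length) for two distinct symbols $a,b$. For $\ell\ge3$, $\boldsymbol{x}\in\Sigma_q^n$ is good if for every integer $t\ge\frac{\log_q n+\log_q\log_q n}{2}-1$ and every $i\in[1,n-t\ell-1]$, the sequence $(x[i],x[i+1],x[i+\ell],x[i+\ell+1],\dots,x[i+t\ell],x[i+t\ell+1])$ of length $2(t+1)$ is not alternating. *)

theory Defs
  imports Complex_Main "HOL-Library.Multiset"
begin

definition words :: "nat \<Rightarrow> nat \<Rightarrow> nat list set" where
  "words q n = {xs. length xs = n \<and> set xs \<subseteq> {..<q}}"

text \<open>1-based entry x[i], with x[i] = 0 for i outside [1,n].\<close>
definition entry :: "nat list \<Rightarrow> int \<Rightarrow> nat" where
  "entry xs i = (if 1 \<le> i \<and> i \<le> int (length xs) then xs ! (nat i - 1) else 0)"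

definition read_vec :: "nat \<Rightarrow> nat list \<Rightarrow> nat multiset list" where
  "read_vec l xs = map (\<lambda>i. mset (map (entry xs) [int i - int l + 1 .. int i]))
                       [1..<length xs + l]"

definition hamming :: "'a list \<Rightarrow> 'a list \<Rightarrow> nat" where
  "hamming u v = card {i. i < length u \<and> i < length v \<and> u ! i \<noteq> v ! i}"

definition is_read_code :: "nat \<Rightarrow> nat \<Rightarrow> nat \<Rightarrow> nat \<Rightarrow> nat list set \<Rightarrow> bool" where
  "is_read_code l q n d C \<longleftrightarrow> C \<subseteq> words q n \<and>
     (\<forall>x\<in>C. \<forall>y\<in>C. x \<noteq> y \<longrightarrow> hamming (read_vec l x) (read_vec l y) \<ge> d)"

definition redundancy :: "nat \<Rightarrow> nat \<Rightarrow> nat list set \<Rightarrow> real" where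
  "redundancy q n C = real n - log q (real (card C))"

definition Inv :: "nat list \<Rightarrow> nat" where
  "Inv xs = card {(i, j). i < j \<and> j < length xs \<and> xs ! i > xs ! j}"

definition alternating :: "nat list \<Rightarrow> bool" where
  "alternating ys \<longleftrightarrow> (\<exists>a b. a \<noteq> b \<and> (\<forall>k<length ys. ys ! k = (if even k then a else b)))"

definition good :: "nat \<Rightarrow> nat \<Rightarrow> nat list \<Rightarrow> bool" where
  "good q l xs \<longleftrightarrow>
     (\<forall>t::nat. real t \<ge> (log q (length xs) + log q (log q (length xs))) / 2 - 1 \<longrightarrow>
       (\<forall>i::int. 1 \<le> i \<and> i \<le> int (length xs) - int t * int l - 1 \<longrightarrow>
         \<not> alternating (concat (map (\<lambda>s. [entry xs (i + int s * int l), entry xs (i + int s * int l + 1)])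
                                      [0..<t + 1]))))"

definition Pval :: "nat \<Rightarrow> nat \<Rightarrow> int" where
  "Pval q n = \<lceil>(log q n + log q (log q n)) / 2\<rceil>"

definition code_C :: "nat \<Rightarrow> nat \<Rightarrow> nat \<Rightarrow> int \<Rightarrow> nat list set" where
  "code_C q l n a = {xs \<in> words q n. good q l xs \<and> int (Inv xs) mod Pval q n = a mod Pval q n}"

end

theory Submission
  imports Defs "HOL-Library.FuncSet"
begin

definition Wn :: "nat \<Rightarrow> nat list \<Rightarrow> int \<Rightarrow> nat multiset" where
  "Wn l x i = mset (map (entry x) [i - int l + 1 .. i])"

lemma entry_out: "i < 1 \<or> i > int (length xs) \<Longrightarrow> entry xs i = 0"
  unfolding entry_def by auto

lemma entry_nth: "j < length xs \<Longrightarrow> entry xs (int j + 1) = xs ! j"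
proof -
  have "nat (int j + 1) = Suc j" by simp
  thus "j < length xs \<Longrightarrow> entry xs (int j + 1) = xs ! j" unfolding entry_def by (simp del: of_nat_Suc)
qed

lemma read_vec_len: "length (read_vec l x) = length x + l - 1"
  unfolding read_vec_def by simp

lemma read_vec_nth: "j < length x + l - 1 \<Longrightarrow> read_vec l x ! j = Wn l x (int j + 1)"
  unfolding read_vec_def Wn_def by (simp add: algebra_simps)

lemma W_eq: "(\<And>j. i - int l + 1 \<le> j \<Longrightarrow> j \<le> i \<Longrightarrow> entry x j = entry y j) \<Longrightarrow> Wn l x i = Wn l y i"
  unfolding Wn_def by (intro arg_cong[where f=mset] map_cong) auto

lemma W_last: "l \<ge> 1 \<Longrightarrow> Wn l x i = add_mset (entry x i) (mset (map (entry x) [i - int l + 1 .. i - 1]))"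
  unfolding Wn_def by (subst upto_rec2) auto

lemma W_first: "l \<ge> 1 \<Longrightarrow> Wn l x i = add_mset (entry x (i - int l + 1)) (mset (map (entry x) [i - int l + 2 .. i]))"
  unfolding Wn_def by (subst upto_rec1) (auto simp: algebra_simps)

lemma W_prop:
  assumes "l \<ge> 1" "Wn l x (i-1) = Wn l y (i-1)" "Wn l x i = Wn l y i"
  shows "(entry x i = entry y i \<and> entry x (i - int l) = entry y (i - int l)) \<or>
         (entry x i = entry x (i - int l) \<and> entry y i = entry y (i - int l))"
proof -
  define Cx where "Cx = mset (map (entry x) [i - int l + 1 .. i - 1])"
  define Cy where "Cy = mset (map (entry y) [i - int l + 1 .. i - 1])"
  have 1: "add_mset (entry x (i - int l)) Cx = add_mset (entry y (i - int l)) Cy"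
    using assms(2) W_first[OF assms(1), of x "i-1"] W_first[OF assms(1), of y "i-1"]
    unfolding Cx_def Cy_def by (simp add: algebra_simps)
  have 2: "add_mset (entry x i) Cx = add_mset (entry y i) Cy"
    using assms(3) W_last[OF assms(1), of x i] W_last[OF assms(1), of y i]
    unfolding Cx_def Cy_def by simp
  have 3: "add_mset (entry x i) (add_mset (entry y (i - int l)) Cy) = add_mset (entry x (i - int l)) (add_mset (entry y i) Cy)"
    using 1 2 by (metis add_mset_commute)
  hence "{#entry x i, entry y (i - int l)#} = {#entry x (i - int l), entry y i#}"
  proof -
    have "{#entry x i, entry y (i - int l)#} + Cy = {#entry x (i - int l), entry y i#} + Cy"
      using 3 by simp
    thus ?thesis by (rule add_right_cancel[THEN iffD1])
  qed
  thus ?thesis by (auto simp: add_eq_conv_diff)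
qed

lemma Inv_swap:
  assumes len: "p + 1 < length z" and lt: "z!p < z!(p+1)"
  shows "Inv (z[p := z!(p+1), p+1 := z!p]) = Inv z + 1"
proof -
  define z' where "z' = z[p := z!(p+1), p+1 := z!p]"
  define \<sigma> where "\<sigma> i = (if i = p then p+1 else if i = p+1 then p else i)" for i
  define g where "g = (\<lambda>(i::nat,j::nat). (\<sigma> i, \<sigma> j))"
  define I where "I w = {(i, j). i < j \<and> j < length w \<and> w ! i > w ! j}" for w :: "nat list"
  have lz: "length z' = length z" unfolding z'_def by simp
  have nz: "z' ! i = z ! \<sigma> i" if "i < length z" for i
    using that len unfolding z'_def \<sigma>_def by (auto simp: nth_list_update)
  have ss: "\<sigma> (\<sigma> i) = i" for i unfolding \<sigma>_def by auto
  have sl: "\<sigma> i < length z \<longleftrightarrow> i < length z" for i using len unfolding \<sigma>_def by auto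
  have ord: "\<sigma> i < \<sigma> j" if "i < j" "(i, j) \<noteq> (p, p+1)" for i j
    using that unfolding \<sigma>_def by auto
  have eq: "I z' = insert (p, p+1) (g ` I z)"
  proof (intro equalityI subsetI)
    fix x assume x: "x \<in> I z'"
    then obtain i j where ij: "x = (i,j)" "i < j" "j < length z" "z' ! i > z' ! j"
      unfolding I_def lz by auto
    show "x \<in> insert (p, p+1) (g ` I z)"
    proof (cases "(i,j) = (p,p+1)")
      case True thus ?thesis using ij by simp
    next
      case False
      have "(\<sigma> i, \<sigma> j) \<in> I z"
      proof -
        have "\<sigma> i \<noteq> \<sigma> j" using ij(2) ss by (metis less_irrefl)
        moreover have "(\<sigma> j, \<sigma> i) \<noteq> (p, p+1)" using False unfolding \<sigma>_def by auto
        moreover have "\<not> (\<sigma> j < \<sigma> i)"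
          using ord[of "\<sigma> j" "\<sigma> i"] ss ij(2) \<open>(\<sigma> j, \<sigma> i) \<noteq> (p, p+1)\<close> by auto
        ultimately have "\<sigma> i < \<sigma> j" by linarith
        moreover have "\<sigma> j < length z" using sl ij(3) by blast
        moreover have "z ! \<sigma> i > z ! \<sigma> j" using nz[of i] nz[of j] ij by simp
        ultimately show ?thesis unfolding I_def by blast
      qed
      moreover have "x = g (\<sigma> i, \<sigma> j)" using ij ss unfolding g_def by simp
      ultimately show ?thesis by blast
    qed
  next
    fix x assume x: "x \<in> insert (p, p+1) (g ` I z)"
    show "x \<in> I z'"
    proof (cases "x = (p, p+1)")
      case True
      have "z' ! p = z ! (p+1)" "z' ! (p+1) = z ! p" using nz[of p] nz[of "p+1"] len unfolding \<sigma>_def by auto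
      thus ?thesis using True len lt unfolding I_def lz by auto
    next
      case False
      then obtain i j where ij: "(i,j) \<in> I z" "x = (\<sigma> i, \<sigma> j)" using x unfolding g_def by auto
      have ne: "(i,j) \<noteq> (p,p+1)" using ij(1) lt unfolding I_def by auto
      have a: "i < j" "j < length z" "z ! i > z ! j" using ij(1) unfolding I_def by auto
      have "\<sigma> i < \<sigma> j" using ord[OF a(1) ne] .
      moreover have "\<sigma> j < length z" using sl a(2) by blast
      moreover have "z' ! \<sigma> i > z' ! \<sigma> j" using nz[of "\<sigma> i"] nz[of "\<sigma> j"] a sl ss by simp
      ultimately show ?thesis unfolding I_def lz ij(2) by blast
    qed
  qed
  have fin: "finite (I z)" unfolding I_def
    by (rule finite_subset[of _ "{..<length z} \<times> {..<length z}"]) auto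
  have inj: "inj_on g (I z)" unfolding g_def inj_on_def using ss by (auto) (metis, metis)
  have notin: "(p, p+1) \<notin> g ` I z"
  proof
    assume "(p, p+1) \<in> g ` I z"
    then obtain i j where "(i,j) \<in> I z" "\<sigma> i = p" "\<sigma> j = p+1" unfolding g_def by auto
    hence "i = \<sigma> p" "j = \<sigma> (p+1)" "i < j" using ss unfolding I_def by (metis, metis, auto)
    hence "i = p+1" "j = p" "i < j" unfolding \<sigma>_def by auto
    thus False by simp
  qed
  have "card (I z') = card (I z) + 1"
    unfolding eq using fin inj notin by (simp add: card_image)
  thus ?thesis unfolding Inv_def z'_def[symmetric] I_def by simp
qed

lemma Inv_multi:
  assumes l: "l \<ge> 2" and ab: "a \<noteq> b" and len: "length x = length y"
    and pos: "\<forall>s<T. p0 + s*l + 1 < length y \<and> x!(p0+s*l) = a \<and> x!(p0+s*l+1) = b \<and> y!(p0+s*l) = b \<and> y!(p0+s*l+1) = a"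
    and oth: "\<forall>j<length y. (\<forall>s<T. j \<noteq> p0+s*l \<and> j \<noteq> p0+s*l+1) \<longrightarrow> x!j = y!j"
  shows "int (Inv x) = int (Inv y) + (if b < a then int T else - int T)"
  using len pos oth
proof (induction T arbitrary: x)
  case 0
  hence "x = y" by (intro nth_equalityI) auto
  thus ?case by simp
next
  case (Suc T)
  define p where "p = p0 + T*l"
  have pl: "p + 1 < length y" and xp: "x!p = a" "x!(p+1) = b" and yp: "y!p = b" "y!(p+1) = a"
    using Suc.prems(2) unfolding p_def by auto
  define x' where "x' = x[p := b, p+1 := a]"
  have lx': "length x' = length y" unfolding x'_def using Suc.prems(1) by simp
  have sep: "s*l + l \<le> T*l" if "s < T" for s
  proof -
    have "(s+1)*l \<le> T*l" using that by (intro mult_le_mono1) simp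
    thus ?thesis by (simp add: algebra_simps)
  qed
  have dif: "p0+s*l \<noteq> p \<and> p0+s*l \<noteq> p+1 \<and> p0+s*l+1 \<noteq> p \<and> p0+s*l+1 \<noteq> p+1" if "s < T" for s
    using sep[OF that] l unfolding p_def by auto
  have "int (Inv x') = int (Inv y) + (if b < a then int T else - int T)"
  proof (rule Suc.IH)
    show "length x' = length y" by (rule lx')
    show "\<forall>s<T. p0 + s*l + 1 < length y \<and> x'!(p0+s*l) = a \<and> x'!(p0+s*l+1) = b \<and> y!(p0+s*l) = b \<and> y!(p0+s*l+1) = a"
    proof (intro allI impI)
      fix s assume s: "s < T"
      have h: "p0 + s*l + 1 < length y \<and> x!(p0+s*l) = a \<and> x!(p0+s*l+1) = b \<and> y!(p0+s*l) = b \<and> y!(p0+s*l+1) = a"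
        using Suc.prems(2) s by simp
      have d: "p0+s*l \<noteq> p" "p0+s*l \<noteq> p+1" "p0+s*l+1 \<noteq> p" "p0+s*l+1 \<noteq> p+1" using dif[OF s] by auto
      have "x'!(p0+s*l) = x!(p0+s*l)" "x'!(p0+s*l+1) = x!(p0+s*l+1)"
        unfolding x'_def using d by (simp_all only: nth_list_update_neq)
      thus "p0 + s*l + 1 < length y \<and> x'!(p0+s*l) = a \<and> x'!(p0+s*l+1) = b \<and> y!(p0+s*l) = b \<and> y!(p0+s*l+1) = a"
        using h by simp
    qed
    show "\<forall>j<length y. (\<forall>s<T. j \<noteq> p0+s*l \<and> j \<noteq> p0+s*l+1) \<longrightarrow> x'!j = y!j"
    proof (intro allI impI)
      fix j assume j: "j < length y" "\<forall>s<T. j \<noteq> p0+s*l \<and> j \<noteq> p0+s*l+1"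
      show "x'!j = y!j"
      proof (cases "j = p \<or> j = p+1")
        case True thus ?thesis using yp pl Suc.prems(1) unfolding x'_def by (auto simp: nth_list_update)
      next
        case False
        hence "\<forall>s<Suc T. j \<noteq> p0+s*l \<and> j \<noteq> p0+s*l+1" using j(2) unfolding p_def
          by (metis less_Suc_eq)
        hence "x!j = y!j" using Suc.prems(3) j(1) by blast
        thus ?thesis using False unfolding x'_def by (auto simp: nth_list_update)
      qed
    qed
  qed
  moreover have x'p: "x'!p = b" "x'!(p+1) = a" using pl Suc.prems(1) unfolding x'_def by (auto simp: nth_list_update)
  moreover have xx: "x = x'[p := x'!(p+1), p+1 := x'!p]"
    using x'p xp pl Suc.prems(1) unfolding x'_def by (intro nth_equalityI) (auto simp: nth_list_update)
  moreover have xx2: "x' = x[p := x!(p+1), p+1 := x!p]" using xp unfolding x'_def by simp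
  ultimately show ?case
  proof (cases "b < a")
    case True
    have "Inv x = Inv x' + 1" using Inv_swap[of p x'] xx x'p True pl lx' by simp
    thus ?thesis using \<open>int (Inv x') = _\<close> True by simp
  next
    case False
    hence "a < b" using ab by simp
    have "Inv x' = Inv x + 1" using Inv_swap[of p x] xx2 xp \<open>a < b\<close> pl Suc.prems(1) by simp
    thus ?thesis using \<open>int (Inv x') = _\<close> False by simp
  qed
qed

lemma concat_pairs_length: "length (concat (map (\<lambda>s. [f s, g s]) [0..<N])) = 2 * N"
  by (induction N) auto

lemma concat_pairs_nth: "r < 2 * N \<Longrightarrow> concat (map (\<lambda>s. [f s, g s]) [0..<N]) ! r = (if even r then f (r div 2) else g (r div 2))"
proof (induction N arbitrary: r)
  case 0 thus ?case by simp
next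
  case (Suc N)
  show ?case
  proof (cases "r < 2 * N")
    case True
    thus ?thesis using Suc.IH[OF True] by (simp add: nth_append concat_pairs_length)
  next
    case False
    hence "r = 2*N \<or> r = 2*N+1" using Suc.prems by auto
    thus ?thesis by (auto simp: nth_append concat_pairs_length)
  qed
qed

lemma alt_pairs: "a \<noteq> b \<Longrightarrow> (\<And>s. s < N \<Longrightarrow> f s = a \<and> g s = b) \<Longrightarrow> alternating (concat (map (\<lambda>s. [f s, g s]) [0..<N]))"
  unfolding alternating_def
  by (rule exI[of _ a], rule exI[of _ b]) (auto simp: concat_pairs_length concat_pairs_nth)

lemma int_mult_le_aux: "(s::int) * L \<le> t * L + 1 \<Longrightarrow> L \<ge> 2 \<Longrightarrow> s \<le> t"
proof (rule ccontr)
  assume a: "s * L \<le> t * L + 1" "L \<ge> 2" "\<not> s \<le> t"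
  hence "(t + 1) * L \<le> s * L" by (intro mult_right_mono) auto
  thus False using a by (simp add: algebra_simps)
qed

lemma dist3:
  assumes l: "l \<ge> 3" and lx: "length x = n" and ly: "length y = n" and ne: "x \<noteq> y"
    and g: "good q l x" and inv: "int (Inv x) mod Pval q n = int (Inv y) mod Pval q n"
  shows "hamming (read_vec l x) (read_vec l y) \<ge> 3"
proof (rule ccontr)
  assume hlt: "\<not> 3 \<le> hamming (read_vec l x) (read_vec l y)"
  define L where "L = int l"
  have L3: "L \<ge> 3" unfolding L_def using l by simp
  define D where "D = {j. entry x j \<noteq> entry y j}"
  have Dsub: "D \<subseteq> {1..int n}"
  proof
    fix j assume "j \<in> D"
    hence "entry x j \<noteq> entry y j" unfolding D_def by simp
    thus "j \<in> {1..int n}" using entry_out[of j x] entry_out[of j y] lx ly by force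
  qed
  have finD: "finite D" using Dsub finite_subset by blast
  have "\<exists>j<n. x!j \<noteq> y!j"
  proof (rule ccontr)
    assume "\<not> (\<exists>j<n. x!j \<noteq> y!j)"
    hence "x = y" using lx ly by (intro nth_equalityI) auto
    thus False using ne by simp
  qed
  then obtain j0 where j0: "j0 < n" "x ! j0 \<noteq> y ! j0" by blast
  have "int j0 + 1 \<in> D" unfolding D_def using j0 entry_nth[of j0 x] entry_nth[of j0 y] lx ly by simp
  hence Dne: "D \<noteq> {}" by blast
  define k where "k = Min D"
  define m where "m = Max D"
  have kD: "k \<in> D" and mD: "m \<in> D" unfolding k_def m_def using finD Dne by auto
  have km: "k \<le> m" unfolding k_def m_def using finD Dne by auto
  have k1: "1 \<le> k" and mn: "m \<le> int n" using kD mD Dsub by auto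
  have belowk: "entry x j = entry y j" if "j < k" for j
  proof (rule ccontr)
    assume "entry x j \<noteq> entry y j"
    hence "j \<in> D" unfolding D_def by simp
    hence "k \<le> j" unfolding k_def using finD by simp
    thus False using that by simp
  qed
  have abovem: "entry x j = entry y j" if "j > m" for j
  proof (rule ccontr)
    assume "entry x j \<noteq> entry y j"
    hence "j \<in> D" unfolding D_def by simp
    hence "j \<le> m" unfolding m_def using finD by simp
    thus False using that by simp
  qed
  define a0 where "a0 = entry x k"
  define b0 where "b0 = entry y k"
  have ab: "a0 \<noteq> b0" using kD unfolding D_def a0_def b0_def by simp
  define H where "H = {j. j < n + l - 1 \<and> Wn l x (int j + 1) \<noteq> Wn l y (int j + 1)}"
  have hamH: "hamming (read_vec l x) (read_vec l y) = card H"
  proof -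
    have "{i. i < length (read_vec l x) \<and> i < length (read_vec l y) \<and> read_vec l x ! i \<noteq> read_vec l y ! i} = H"
      unfolding H_def read_vec_len using lx ly by (auto simp: read_vec_nth)
    thus ?thesis unfolding hamming_def by simp
  qed
  have finH: "finite H" unfolding H_def by simp
  have Wk: "Wn l x k \<noteq> Wn l y k"
  proof -
    have e: "map (entry x) [k - int l + 1 .. k - 1] = map (entry y) [k - int l + 1 .. k - 1]"
      by (rule map_cong) (auto intro: belowk)
    have "Wn l x k = add_mset a0 (mset (map (entry y) [k - int l + 1 .. k - 1]))"
      using W_last[of l x k] l e unfolding a0_def by simp
    moreover have "Wn l y k = add_mset b0 (mset (map (entry y) [k - int l + 1 .. k - 1]))"
      using W_last[of l y k] l unfolding b0_def by simp
    ultimately show ?thesis using ab by simp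
  qed
  have Wm: "Wn l x (m + int l - 1) \<noteq> Wn l y (m + int l - 1)"
  proof -
    have e: "map (entry x) [m + int l - 1 - int l + 2 .. m + int l - 1] = map (entry y) [m + int l - 1 - int l + 2 .. m + int l - 1]"
      by (rule map_cong) (auto intro: abovem)
    have e2: "m + int l - 1 - int l + 1 = m" by simp
    have "Wn l x (m + int l - 1) = add_mset (entry x m) (mset (map (entry x) [m + int l - 1 - int l + 2 .. m + int l - 1]))"
      using W_first[of l x "m + int l - 1"] l e2 by simp
    hence "Wn l x (m + int l - 1) = add_mset (entry x m) (mset (map (entry y) [m + int l - 1 - int l + 2 .. m + int l - 1]))"
      by (simp only: e)
    moreover have "Wn l y (m + int l - 1) = add_mset (entry y m) (mset (map (entry y) [m + int l - 1 - int l + 2 .. m + int l - 1]))"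
      using W_first[of l y "m + int l - 1"] l e2 by simp
    ultimately show ?thesis using mD unfolding D_def by simp
  qed
  have kH: "nat (k - 1) \<in> H" unfolding H_def using Wk k1 mn km l by auto
  have mH: "nat (m + int l - 2) \<in> H"
  proof -
    have e: "int (nat (m + int l - 2)) + 1 = m + int l - 1" using k1 km l by simp
    have "nat (m + int l - 2) < n + l - 1" using mn k1 km l by linarith
    moreover have "Wn l x (int (nat (m + int l - 2)) + 1) \<noteq> Wn l y (int (nat (m + int l - 2)) + 1)"
      unfolding e by (rule Wm)
    ultimately show ?thesis unfolding H_def by blast
  qed
  have Weq: "Wn l x i = Wn l y i" if "1 \<le> i" "i \<le> int n + int l - 1" "i \<noteq> k" "i \<noteq> m + int l - 1" for i
  proof (rule ccontr)
    assume "Wn l x i \<noteq> Wn l y i"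
    hence iH: "nat (i - 1) \<in> H" unfolding H_def using that l by auto
    have "{nat (k - 1), nat (m + int l - 2), nat (i - 1)} \<subseteq> H" using kH mH iH by auto
    moreover have "card {nat (k - 1), nat (m + int l - 2), nat (i - 1)} = 3"
    proof -
      have "nat (k - 1) \<noteq> nat (m + int l - 2)" "nat (k - 1) \<noteq> nat (i - 1)" "nat (m + int l - 2) \<noteq> nat (i - 1)"
        using that k1 km l by arith+
      thus ?thesis by simp
    qed
    ultimately have "card H \<ge> 3" using finH by (metis card_mono)
    thus False using hlt hamH by simp
  qed
  have Lpos: "L > 0" using L3 by simp
  define pat where "pat j \<longleftrightarrow> (if (j - k) mod L = 0 then entry x j = a0 \<and> entry y j = b0
     else if (j - k) mod L = 1 then entry x j = b0 \<and> entry y j = a0 else entry x j = entry y j)" for j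
  have patall: "pat (k + int d)" if "k + int d \<le> m + L - 2" for d
    using that
  proof (induction d rule: less_induct)
    case (less d)
    consider "d = 0" | "d = 1" | "d \<ge> 2" by linarith
    then show ?case
    proof cases
      case 1 thus ?thesis unfolding pat_def a0_def b0_def by simp
    next
      case 2
      have W1: "Wn l x (k+1) = Wn l y (k+1)"
        by (rule Weq) (use k1 km mn l in auto)
      define M where "M = mset (map (entry y) [k - L + 2 .. k - 1])"
      have e: "map (entry x) [k - L + 2 .. k - 1] = map (entry y) [k - L + 2 .. k - 1]"
        by (rule map_cong) (auto intro: belowk)
      have sp: "[k + 1 - int l + 1 .. k + 1 - 1] = [k - L + 2 .. k - 1] @ [k]"
        using upto_rec2[of "k - L + 2" k] L3 unfolding L_def by (simp add: algebra_simps)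
      have "Wn l x (k+1) = add_mset (entry x (k+1)) (add_mset a0 (mset (map (entry x) [k - L + 2 .. k - 1])))"
        using W_last[of l x "k+1"] l sp unfolding a0_def by simp
      hence wx: "Wn l x (k+1) = add_mset (entry x (k+1)) (add_mset a0 M)" unfolding M_def by (simp only: e)
      have wy: "Wn l y (k+1) = add_mset (entry y (k+1)) (add_mset b0 M)"
        using W_last[of l y "k+1"] l sp unfolding b0_def M_def by simp
      have "{#entry x (k+1), a0#} + M = {#entry y (k+1), b0#} + M" using W1 wx wy by simp
      hence "{#entry x (k+1), a0#} = {#entry y (k+1), b0#}" by (simp add: add_mset_commute)
      hence ee: "entry x (k+1) = b0 \<and> entry y (k+1) = a0" using ab by (auto simp: add_eq_conv_diff)
      have "(k + 1 - k) mod L = 1" using L3 by simp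
      thus ?thesis unfolding pat_def using 2 ee by simp
    next
      case 3
      define i where "i = k + int d"
      have Wa: "Wn l x (i-1) = Wn l y (i-1)"
        by (rule Weq) (use k1 km mn l 3 less.prems in \<open>auto simp: i_def L_def\<close>)
      have Wb: "Wn l x i = Wn l y i"
        by (rule Weq) (use k1 km mn l 3 less.prems in \<open>auto simp: i_def L_def\<close>)
      have pr: "(entry x i = entry y i \<and> entry x (i - L) = entry y (i - L)) \<or>
         (entry x i = entry x (i - L) \<and> entry y i = entry y (i - L))"
        using W_prop[OF _ Wa Wb] l unfolding L_def by simp
      show ?thesis
      proof (cases "d < l")
        case True
        have "entry x (i - L) = entry y (i - L)" using True unfolding i_def L_def by (intro belowk) simp
        moreover have "(i - k) mod L = int d" using True 3 unfolding i_def L_def by simp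
        ultimately show ?thesis using pr 3 unfolding pat_def i_def[symmetric] by auto
      next
        case False
        have IH: "pat (k + int (d - l))" using less.IH[of "d - l"] False l less.prems by simp
        have e1: "k + int (d - l) = i - L" using False unfolding i_def L_def by simp
        have e2: "(i - L - k) mod L = (i - k) mod L"
        proof -
          have "i - L - k = (i - k) + (-1) * L" by simp
          thus ?thesis by (simp only: mod_mult_self1)
        qed
        show ?thesis using IH pr ab unfolding pat_def e1 e2 i_def[symmetric] by (auto split: if_splits)
      qed
    qed
  qed
  have pm: "pat m" using patall[of "nat (m - k)"] km L3 by simp
  have rm: "(m - k) mod L = 1"
  proof (rule ccontr)
    assume r1: "(m - k) mod L \<noteq> 1"
    have "entry x m \<noteq> entry y m" using mD unfolding D_def by simp
    hence r0: "(m - k) mod L = 0" using pm r1 unfolding pat_def by (auto split: if_splits)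
    have "pat (m + 1)" using patall[of "nat (m + 1 - k)"] km L3 by simp
    moreover have "(m + 1 - k) mod L = 1"
    proof -
      have "(m + 1 - k) mod L = ((m - k) + 1) mod L" by (simp add: algebra_simps)
      also have "\<dots> = ((m - k) mod L + 1) mod L" by (simp add: mod_add_left_eq)
      finally have "(m + 1 - k) mod L = ((m - k) mod L + 1) mod L" .
      thus ?thesis using r0 L3 by simp
    qed
    ultimately have "entry x (m+1) \<noteq> entry y (m+1)" using ab unfolding pat_def by auto
    thus False using abovem[of "m+1"] by simp
  qed
  define t where "t = nat ((m - k) div L)"
  have mt: "m = k + int t * L + 1"
  proof -
    have "(m - k) div L \<ge> 0" using km Lpos by (simp add: pos_imp_zdiv_nonneg_iff)
    hence "int t = (m - k) div L" unfolding t_def by simp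
    moreover have "m - k = (m - k) div L * L + (m - k) mod L" by simp
    ultimately show ?thesis using rm by simp
  qed
  have sL: "(int s * L) mod L = 0" for s by simp
  have sL1: "(int s * L + 1) mod L = 1" for s
  proof -
    have "(int s * L + 1) mod L = 1 mod L" by (simp only: mod_mult_self3)
    thus ?thesis using L3 by simp
  qed
  have xs: "entry x (k + int s * L) = a0 \<and> entry y (k + int s * L) = b0 \<and>
            entry x (k + int s * L + 1) = b0 \<and> entry y (k + int s * L + 1) = a0" if "s \<le> t" for s
  proof -
    have "int s * L \<le> int t * L" using that Lpos by (intro mult_right_mono) auto
    hence le: "k + int s * L + 1 \<le> m" using mt by simp
    have p1: "pat (k + int s * L)" using patall[of "s * l"] le L3 unfolding L_def by simp
    have p2: "pat (k + int s * L + 1)" using patall[of "s * l + 1"] le L3 unfolding L_def by (simp add: algebra_simps)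
    show ?thesis using p1 p2 sL[of s] sL1[of s] unfolding pat_def by (simp add: add.assoc)
  qed
  have notalt: "alternating (concat (map (\<lambda>s. [entry x (k + int s * int l), entry x (k + int s * int l + 1)]) [0..<t + 1]))"
    using xs ab unfolding L_def by (intro alt_pairs) auto
  have tsmall: "\<not> real t \<ge> (log q (length x) + log q (log q (length x))) / 2 - 1"
  proof
    assume tb: "real t \<ge> (log q (length x) + log q (log q (length x))) / 2 - 1"
    have "1 \<le> k \<and> k \<le> int (length x) - int t * int l - 1" using k1 mt mn lx unfolding L_def by simp
    thus False using g tb notalt unfolding good_def by blast
  qed
  have tP: "int t + 1 < Pval q n"
  proof -
    have "real t + 1 < (log q n + log q (log q n)) / 2" using tsmall unfolding lx by linarith
    also have "\<dots> \<le> of_int (Pval q n)" unfolding Pval_def by (rule le_of_int_ceiling)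
    finally show ?thesis by linarith
  qed
  define p0 where "p0 = nat (k - 1)"
  have ip: "int (p0 + s * l) + 1 = k + int s * L" for s unfolding p0_def L_def using k1 by simp
  have Ieq: "int (Inv x) = int (Inv y) + (if b0 < a0 then int (t+1) else - int (t+1))"
  proof (rule Inv_multi)
    show "l \<ge> 2" using l by simp
    show "a0 \<noteq> b0" by (rule ab)
    show "length x = length y" using lx ly by simp
    show "\<forall>s<t+1. p0 + s*l + 1 < length y \<and> x!(p0+s*l) = a0 \<and> x!(p0+s*l+1) = b0 \<and> y!(p0+s*l) = b0 \<and> y!(p0+s*l+1) = a0"
    proof (intro allI impI)
      fix s assume s: "s < t + 1"
      have "int s * L \<le> int t * L" using s Lpos by (intro mult_right_mono) auto
      hence lt: "p0 + s*l + 1 < n" using ip[of s] mt mn by linarith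
      have e1: "x!(p0+s*l) = entry x (k + int s * L)" "y!(p0+s*l) = entry y (k + int s * L)"
        using entry_nth[of "p0+s*l" x] entry_nth[of "p0+s*l" y] lt lx ly ip[of s] by auto
      have i2: "int (p0 + s*l + 1) + 1 = k + int s * L + 1" using ip[of s] by simp
      have "x!(p0+s*l+1) = entry x (int (p0 + s*l + 1) + 1)" "y!(p0+s*l+1) = entry y (int (p0 + s*l + 1) + 1)"
        using entry_nth[of "p0+s*l+1" x] entry_nth[of "p0+s*l+1" y] lt lx ly by auto
      hence e2: "x!(p0+s*l+1) = entry x (k + int s * L + 1)" "y!(p0+s*l+1) = entry y (k + int s * L + 1)"
        unfolding i2 by auto
      show "p0 + s*l + 1 < length y \<and> x!(p0+s*l) = a0 \<and> x!(p0+s*l+1) = b0 \<and> y!(p0+s*l) = b0 \<and> y!(p0+s*l+1) = a0"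
        using lt ly e1 e2 xs[of s] s by simp
    qed
    show "\<forall>j<length y. (\<forall>s<t+1. j \<noteq> p0+s*l \<and> j \<noteq> p0+s*l+1) \<longrightarrow> x!j = y!j"
    proof (intro allI impI)
      fix j assume j: "j < length y" and nj: "\<forall>s<t+1. j \<noteq> p0+s*l \<and> j \<noteq> p0+s*l+1"
      define pos where "pos = int j + 1"
      have xj: "x!j = entry x pos" "y!j = entry y pos" unfolding pos_def using entry_nth[of j x] entry_nth[of j y] j lx ly by auto
      have "entry x pos = entry y pos"
      proof (cases "pos < k \<or> pos > m")
        case True thus ?thesis using belowk[of pos] abovem[of pos] by blast
      next
        case False
        hence pk: "k \<le> pos" "pos \<le> m" by auto
        have pp: "pat pos" using patall[of "nat (pos - k)"] pk L3 by simp
        define s' where "s' = (pos - k) div L"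
        have s'0: "s' \<ge> 0" unfolding s'_def using pk Lpos by (simp add: pos_imp_zdiv_nonneg_iff)
        have dm: "pos - k = s' * L + (pos - k) mod L" unfolding s'_def by simp
        show ?thesis
        proof (cases "(pos - k) mod L = 0 \<or> (pos - k) mod L = 1")
          case True
          have r01: "0 \<le> (pos - k) mod L" "(pos - k) mod L \<le> 1" using True by auto
          have "s' * L \<le> int t * L + 1" using dm pk(2) mt r01 by linarith
          hence "s' \<le> int t" using L3 int_mult_le_aux[of s' L "int t"] by simp
          hence sl: "nat s' < t + 1" using s'0 by simp
          have "int (p0 + nat s' * l) + 1 = k + s' * L" using ip[of "nat s'"] s'0 by simp
          hence ij: "int j = int (p0 + nat s' * l) + (pos - k) mod L" using dm pos_def by linarith
          have "j = p0 + nat s' * l \<or> j = p0 + nat s' * l + 1"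
          proof (cases "(pos - k) mod L = 0")
            case True
            hence "int j = int (p0 + nat s' * l)" using ij by simp
            hence "j = p0 + nat s' * l" by (simp only: of_nat_eq_iff)
            thus ?thesis by blast
          next
            case False
            hence "int j = int (p0 + nat s' * l + 1)" using ij \<open>(pos - k) mod L = 0 \<or> (pos - k) mod L = 1\<close> by simp
            hence "j = p0 + nat s' * l + 1" by (simp only: of_nat_eq_iff)
            thus ?thesis by blast
          qed
          thus ?thesis using nj sl by blast
        next
          case False thus ?thesis using pp unfolding pat_def by simp
        qed
      qed
      thus "x!j = y!j" using xj by simp
    qed
  qed
  have "Pval q n dvd int (Inv x) - int (Inv y)" using inv by (simp add: mod_eq_dvd_iff)
  moreover have "int (Inv x) - int (Inv y) = (if b0 < a0 then int (t+1) else - int (t+1))" using Ieq by simp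
  ultimately have dd: "Pval q n dvd (if b0 < a0 then int (t+1) else - int (t+1))" by simp
  have "Pval q n dvd int (t + 1)"
    using dd by (cases "b0 < a0") (simp_all only: if_True if_False dvd_minus_iff)
  hence "Pval q n \<le> int (t + 1)" by (rule zdvd_imp_le) simp
  thus False using tP by simp
qed

lemma card_fixed:
  assumes S: "S \<subseteq> {..<n}"
  shows "card {xs \<in> words q n. \<forall>j\<in>S. xs!j = w j} \<le> q ^ (n - card S)"
proof -
  define B where "B = {xs \<in> words q n. \<forall>j\<in>S. xs!j = w j}"
  define \<phi> where "\<phi> xs = restrict (\<lambda>j. xs!j) {..<n}" for xs :: "nat list"
  define F where "F j = (if j \<in> S then {w j} else {..<q})" for j
  have inj: "inj_on \<phi> B"
  proof
    fix xs ys assume xs: "xs \<in> B" and ys: "ys \<in> B" and e: "\<phi> xs = \<phi> ys"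
    have l: "length xs = n" "length ys = n" using xs ys unfolding B_def words_def by auto
    show "xs = ys"
    proof (rule nth_equalityI)
      show "length xs = length ys" using l by simp
      fix j assume "j < length xs"
      hence "j \<in> {..<n}" using l by simp
      thus "xs ! j = ys ! j" using fun_cong[OF e, of j] unfolding \<phi>_def by simp
    qed
  qed
  have sub: "\<phi> ` B \<subseteq> PiE {..<n} F"
  proof
    fix f assume "f \<in> \<phi> ` B"
    then obtain xs where xs: "xs \<in> B" "f = \<phi> xs" by auto
    have l: "length xs = n" and sx: "set xs \<subseteq> {..<q}" and fx: "\<forall>j\<in>S. xs!j = w j"
      using xs(1) unfolding B_def words_def by auto
    show "f \<in> PiE {..<n} F"
    proof (rule PiE_I)
      fix j assume j: "j \<in> {..<n}"
      have "xs ! j \<in> {..<q}" using sx l j nth_mem by blast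
      thus "f j \<in> F j" using xs(2) j fx unfolding \<phi>_def F_def by auto
    next
      fix j assume "j \<notin> {..<n}"
      thus "f j = undefined" using xs(2) unfolding \<phi>_def by simp
    qed
  qed
  have "card B = card (\<phi> ` B)" using inj by (simp add: card_image)
  also have "\<dots> \<le> card (PiE {..<n} F)" using sub by (intro card_mono) (auto intro: finite_PiE simp: F_def)
  also have "\<dots> = (\<Prod>j\<in>{..<n}. card (F j))" by (simp add: card_PiE)
  also have "\<dots> = (\<Prod>j\<in>{..<n}. if j \<in> S then 1 else q)" unfolding F_def by (intro prod.cong) auto
  also have "\<dots> = (\<Prod>j\<in>{..<n} - S. q)"
  proof -
    have "(\<Prod>j\<in>{..<n}. if j \<in> S then 1 else q) = (\<Prod>j\<in>S. 1) * (\<Prod>j\<in>{..<n} - S. q)"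
      using S by (subst prod.If_cases) (auto simp: Int_absorb1 Diff_eq)
    thus ?thesis by simp
  qed
  also have "\<dots> = q ^ (n - card S)" using S by (simp add: card_Diff_subset finite_subset)
  finally show ?thesis unfolding B_def .
qed

definition seqf :: "nat \<Rightarrow> nat list \<Rightarrow> int \<Rightarrow> nat \<Rightarrow> nat list" where
  "seqf l xs i t = concat (map (\<lambda>s. [entry xs (i + int s * int l), entry xs (i + int s * int l + 1)]) [0..<t + 1])"

lemma card_A:
  assumes l: "l \<ge> 2" and i1: "1 \<le> i" and it: "i + int t * int l + 1 \<le> int n"
  shows "card {xs \<in> words q n. alternating (seqf l xs i t)} * q ^ (2*t) \<le> q ^ n"
proof -
  define p0 where "p0 = nat (i - 1)"
  define f where "f r = p0 + (r div 2) * l + r mod 2" for r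
  define S where "S = f ` {..<2*t+2}"
  define w where "w a b j = (if (j - p0) mod l = 0 then a else (b::nat))" for a b j
  have tl: "2 * t \<le> t * l" using l by simp
  have "int (2*t) \<le> int (t*l)" using tl by (simp only: of_nat_le_iff)
  hence "2 * int t \<le> int t * int l" by simp
  hence n2: "2*t+2 \<le> n" using it i1 by linarith
  have fmod: "(r div 2 * l + r mod 2) mod l = r mod 2" for r
  proof -
    have "r mod 2 < l" using l by linarith
    thus ?thesis by simp
  qed
  have fdiv: "(r div 2 * l + r mod 2) div l = r div 2" for r
  proof -
    have "r mod 2 < l" using l by linarith
    thus ?thesis using l by simp
  qed
  have inj: "inj_on f {..<2*t+2}"
  proof
    fix r1 r2 assume "f r1 = f r2"
    hence e: "r1 div 2 * l + r1 mod 2 = r2 div 2 * l + r2 mod 2" unfolding f_def by simp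
    have "r1 mod 2 = r2 mod 2" using fmod[of r1] fmod[of r2] e by simp
    moreover have "r1 div 2 = r2 div 2" using fdiv[of r1] fdiv[of r2] e by simp
    ultimately show "r1 = r2" by (metis div_mult_mod_eq)
  qed
  have fle: "f r \<le> p0 + t * l + 1" if "r < 2*t+2" for r
  proof -
    have "r div 2 \<le> t" using that by simp
    hence "r div 2 * l \<le> t * l" by (rule mult_le_mono1)
    moreover have "r mod 2 \<le> 1" by simp
    ultimately show ?thesis unfolding f_def by linarith
  qed
  have Ssub: "S \<subseteq> {..<n}"
  proof
    fix j assume "j \<in> S"
    then obtain r where r: "r < 2*t+2" "j = f r" unfolding S_def by auto
    have "int (p0 + t * l + 1) < int n" using it i1 unfolding p0_def by simp
    hence "p0 + t * l + 1 < n" by (simp only: of_nat_less_iff)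
    thus "j \<in> {..<n}" using fle[OF r(1)] r(2) by simp
  qed
  have cS: "card S = 2*t+2" unfolding S_def using inj by (simp add: card_image)
  have sub: "{xs \<in> words q n. alternating (seqf l xs i t)} \<subseteq>
      (\<Union>a\<in>{..<q}. \<Union>b\<in>{..<q}. {xs \<in> words q n. \<forall>j\<in>S. xs!j = w a b j})"
  proof
    fix xs assume xs: "xs \<in> {xs \<in> words q n. alternating (seqf l xs i t)}"
    have lx: "length xs = n" and sx: "set xs \<subseteq> {..<q}" using xs unfolding words_def by auto
    obtain a b where ab: "a \<noteq> b" and alt: "\<forall>k<length (seqf l xs i t). seqf l xs i t ! k = (if even k then a else b)"
      using xs unfolding alternating_def by auto
    have len: "length (seqf l xs i t) = 2*t+2" unfolding seqf_def by (simp add: concat_pairs_length)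
    have sq: "seqf l xs i t ! r = (if even r then a else b)" if "r < 2*t+2" for r
      using alt len that by simp
    have sq2: "seqf l xs i t ! r = entry xs (i + int (r div 2) * int l + int (r mod 2))" if "r < 2*t+2" for r
    proof -
      have "seqf l xs i t ! r = (if even r then entry xs (i + int (r div 2) * int l) else entry xs (i + int (r div 2) * int l + 1))"
        unfolding seqf_def using that by (subst concat_pairs_nth) auto
      thus ?thesis by (auto simp: odd_iff_mod_2_eq_one)
    qed
    have ent: "xs ! f r = seqf l xs i t ! r" if "r < 2*t+2" for r
    proof -
      have fr: "f r < n" using Ssub that unfolding S_def by auto
      have "int (f r) + 1 = i + int (r div 2) * int l + int (r mod 2)" unfolding f_def p0_def using i1 by simp
      thus ?thesis using entry_nth[of "f r" xs] fr lx sq2[OF that] by simp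
    qed
    have aq: "a < q"
    proof -
      have "a = xs ! f 0" using ent[of 0] sq[of 0] by simp
      moreover have "f 0 < n" using Ssub unfolding S_def by auto
      ultimately show ?thesis using sx lx nth_mem by fastforce
    qed
    have bq: "b < q"
    proof -
      have "b = xs ! f 1" using ent[of 1] sq[of 1] by simp
      moreover have "f 1 < n" using Ssub unfolding S_def by auto
      ultimately show ?thesis using sx lx nth_mem by fastforce
    qed
    have "\<forall>j\<in>S. xs!j = w a b j"
    proof
      fix j assume "j \<in> S"
      then obtain r where r: "r < 2*t+2" "j = f r" unfolding S_def by auto
      have "(f r - p0) mod l = r mod 2" unfolding f_def using fmod by simp
      hence "w a b (f r) = (if even r then a else b)" unfolding w_def by (auto simp: odd_iff_mod_2_eq_one)
      thus "xs!j = w a b j" using ent[OF r(1)] sq[OF r(1)] r(2) by simp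
    qed
    thus "xs \<in> (\<Union>a\<in>{..<q}. \<Union>b\<in>{..<q}. {xs \<in> words q n. \<forall>j\<in>S. xs!j = w a b j})"
      using aq bq xs by blast
  qed
  have "card {xs \<in> words q n. alternating (seqf l xs i t)} \<le>
      card (\<Union>a\<in>{..<q}. \<Union>b\<in>{..<q}. {xs \<in> words q n. \<forall>j\<in>S. xs!j = w a b j})"
  proof (rule card_mono[OF _ sub])
    have finW: "finite (words q n)" unfolding words_def using finite_lists_length_eq[of "{..<q}" n]
      by (simp add: conj_commute)
    show "finite (\<Union>a\<in>{..<q}. \<Union>b\<in>{..<q}. {xs \<in> words q n. \<forall>j\<in>S. xs!j = w a b j})"
      by (intro finite_UN_I finite_subset[OF _ finW]) auto
  qed
  also have "\<dots> \<le> (\<Sum>a\<in>{..<q}. card (\<Union>b\<in>{..<q}. {xs \<in> words q n. \<forall>j\<in>S. xs!j = w a b j}))"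
    by (rule card_UN_le) simp
  also have "\<dots> \<le> (\<Sum>a\<in>{..<q}. \<Sum>b\<in>{..<q}. card {xs \<in> words q n. \<forall>j\<in>S. xs!j = w a b j})"
    by (intro sum_mono card_UN_le) simp
  also have "\<dots> \<le> (\<Sum>a\<in>{..<q}. \<Sum>b\<in>{..<q}. q ^ (n - card S))"
    by (intro sum_mono card_fixed Ssub)
  also have "\<dots> = q * q * q ^ (n - (2*t+2))" unfolding cS by simp
  finally have c: "card {xs \<in> words q n. alternating (seqf l xs i t)} \<le> q * q * q ^ (n - (2*t+2))" .
  have "q * q * q ^ (n - (2*t+2)) * q ^ (2*t) = q ^ n"
  proof -
    obtain d where d: "n = d + 2 * t + 2" using n2 by (metis add.commute le_add_diff_inverse2 add.assoc)
    show ?thesis unfolding d by (simp add: power_add algebra_simps)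
  qed
  thus ?thesis using c by (metis mult_le_mono1)
qed

lemma geom_bound:
  fixes r :: real
  assumes "0 \<le> r" "r \<le> 1/2"
  shows "(\<Sum>t\<in>{a..b}. r ^ t) \<le> 2 * r ^ a"
proof (cases "b < a")
  case True thus ?thesis using assms by simp
next
  case False
  have "(\<Sum>t\<in>{a..b}. r ^ t) = (r ^ a - r ^ Suc b) / (1 - r)"
    using False assms by (subst sum_gp) auto
  also have "\<dots> \<le> r ^ a / (1 - r)" using assms by (intro divide_right_mono) auto
  also have "\<dots> \<le> 2 * r ^ a"
  proof -
    have "1 \<le> 2 * (1 - r)" using assms by simp
    hence "r ^ a * 1 \<le> r ^ a * (2 * (1 - r))" using assms by (intro mult_left_mono) auto
    hence "r ^ a \<le> 2 * r ^ a * (1 - r)" by (simp add: algebra_simps)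
    thus ?thesis using assms by (simp add: divide_le_eq)
  qed
  finally show ?thesis .
qed

lemma pow_T0:
  assumes q: "q \<ge> (2::nat)" and u: "log q n > 0"
  shows "real q ^ (2 * nat \<lceil>(log q n + log q (log q n)) / 2 - 1\<rceil>) \<ge> real n * log q n / real q ^ 2"
proof -
  define thr where "thr = (log q n + log q (log q n)) / 2 - 1"
  have q1: "real q > 1" using q by simp
  have n0: "real n > 0"
  proof (rule ccontr)
    assume "\<not> real n > 0" hence "real n = 0" by simp
    thus False using u by (simp add: log_def)
  qed
  have "real (2 * nat \<lceil>thr\<rceil>) \<ge> 2 * thr" by linarith
  hence "q powr (2 * thr) \<le> q powr real (2 * nat \<lceil>thr\<rceil>)" using q1 by (intro powr_mono) auto
  also have "\<dots> = real q ^ (2 * nat \<lceil>thr\<rceil>)" using q1 powr_realpow[of "real q" "2 * nat \<lceil>thr\<rceil>"] by simp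
  finally have a: "q powr (2 * thr) \<le> real q ^ (2 * nat \<lceil>thr\<rceil>)" .
  have "2 * thr = log q n + log q (log q n) - 2" unfolding thr_def by simp
  hence "q powr (2 * thr) = q powr (log q n) * q powr (log q (log q n)) / q powr 2"
    by (simp only: powr_add powr_diff)
  also have "\<dots> = real n * log q n / real q ^ 2" using q1 n0 u by (simp add: powr_numeral)
  finally show ?thesis using a unfolding thr_def by simp
qed

lemma bad_bound:
  assumes q: "q \<ge> (2::nat)" and l: "l \<ge> 2" and u: "log q n > 0"
  shows "real (card {xs \<in> words q n. \<not> good q l xs}) \<le> 2 * real q ^ 2 * real q ^ n / log q n"
proof -
  define thr where "thr = (log q n + log q (log q n)) / 2 - 1"
  define T0 where "T0 = nat \<lceil>thr\<rceil>"
  define A where "A t i = (if i + int t * int l + 1 \<le> int n then {xs \<in> words q n. alternating (seqf l xs i t)} else {})" for t i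
  have finW: "finite (words q n)" unfolding words_def using finite_lists_length_eq[of "{..<q}" n]
    by (simp add: conj_commute)
  have q1: "real q > 1" using q by simp
  have n0: "real n > 0"
  proof (rule ccontr)
    assume "\<not> real n > 0" hence "real n = 0" by simp
    thus False using u by (simp add: log_def)
  qed
  have cA: "real (card (A t i)) \<le> real q ^ n / real q ^ (2*t)" if "i \<in> {1..int n}" for t i
  proof (cases "i + int t * int l + 1 \<le> int n")
    case True
    have "card (A t i) * q ^ (2*t) \<le> q ^ n" unfolding A_def using True card_A[OF l, of i t n q] that by simp
    hence "real (card (A t i) * q ^ (2*t)) \<le> real (q ^ n)" by (simp only: of_nat_le_iff)
    hence "real (card (A t i)) * real q ^ (2*t) \<le> real q ^ n" by simp
    thus ?thesis using q1 by (simp add: le_divide_eq)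
  next
    case False thus ?thesis unfolding A_def by simp
  qed
  have sub: "{xs \<in> words q n. \<not> good q l xs} \<subseteq> (\<Union>t\<in>{T0..n}. \<Union>i\<in>{1..int n}. A t i)"
  proof
    fix xs assume xs: "xs \<in> {xs \<in> words q n. \<not> good q l xs}"
    hence lx: "length xs = n" unfolding words_def by simp
    have ng: "\<not> good q l xs" using xs by simp
    have "\<exists>t. real t \<ge> thr \<and> (\<exists>i. 1 \<le> i \<and> i \<le> int n - int t * int l - 1 \<and> alternating (seqf l xs i t))"
      using ng unfolding good_def seqf_def thr_def lx by blast
    then obtain t i where t: "real t \<ge> thr" and i: "1 \<le> i" "i \<le> int n - int t * int l - 1"
      and alt: "alternating (seqf l xs i t)" by blast
    have "T0 \<le> t" unfolding T0_def using t by linarith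
    moreover have "t \<le> n"
    proof -
      have "t * 1 \<le> t * l" using l by (intro mult_le_mono2) simp
      hence "int (t * 1) \<le> int (t * l)" by (simp only: of_nat_le_iff)
      hence "int t \<le> int t * int l" by simp
      thus ?thesis using i by linarith
    qed
    moreover have "xs \<in> A t i" unfolding A_def using i alt xs by auto
    moreover have "i \<in> {1..int n}"
    proof -
      have "0 \<le> int t * int l" by simp
      hence "i \<le> int n" using i by linarith
      thus ?thesis using i by simp
    qed
    ultimately have "t \<in> {T0..n}" "i \<in> {1..int n}" "xs \<in> A t i" by auto
    thus "xs \<in> (\<Union>t\<in>{T0..n}. \<Union>i\<in>{1..int n}. A t i)" by blast
  qed
  have "card {xs \<in> words q n. \<not> good q l xs} \<le> card (\<Union>t\<in>{T0..n}. \<Union>i\<in>{1..int n}. A t i)"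
  proof (rule card_mono[OF _ sub])
    have "finite (A t i)" for t i unfolding A_def using finW by auto
    thus "finite (\<Union>t\<in>{T0..n}. \<Union>i\<in>{1..int n}. A t i)" by (intro finite_UN_I) auto
  qed
  also have "\<dots> \<le> (\<Sum>t\<in>{T0..n}. card (\<Union>i\<in>{1..int n}. A t i))" by (rule card_UN_le) simp
  also have "\<dots> \<le> (\<Sum>t\<in>{T0..n}. \<Sum>i\<in>{1..int n}. card (A t i))" by (intro sum_mono card_UN_le) simp
  finally have c0: "card {xs \<in> words q n. \<not> good q l xs} \<le> (\<Sum>t\<in>{T0..n}. \<Sum>i\<in>{1..int n}. card (A t i))" .
  have "real (card {xs \<in> words q n. \<not> good q l xs}) \<le> real (\<Sum>t\<in>{T0..n}. \<Sum>i\<in>{1..int n}. card (A t i))"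
    using c0 by (simp only: of_nat_le_iff)
  also have "\<dots> = (\<Sum>t\<in>{T0..n}. \<Sum>i\<in>{1..int n}. real (card (A t i)))" by simp
  also have "\<dots> \<le> (\<Sum>t\<in>{T0..n}. \<Sum>i\<in>{1..int n}. real q ^ n / real q ^ (2*t))"
    by (intro sum_mono cA)
  also have "\<dots> = real n * real q ^ n * (\<Sum>t\<in>{T0..n}. (1 / real q ^ 2) ^ t)"
  proof -
    have "(\<Sum>i\<in>{1..int n}. real q ^ n / real q ^ (2*t)) = real n * real q ^ n * (1 / real q ^ 2) ^ t" for t
      by (simp add: power_mult power_divide)
    thus ?thesis by (simp add: sum_distrib_left)
  qed
  also have "\<dots> \<le> real n * real q ^ n * (2 * (1 / real q ^ 2) ^ T0)"
  proof -
    have "(2::real) ^ 2 \<le> real q ^ 2" using q by (intro power_mono) auto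
    hence "real q ^ 2 \<ge> 2" by simp
    hence "1 / real q ^ 2 \<le> 1/2" by (simp add: divide_le_eq)
    hence "(\<Sum>t\<in>{T0..n}. (1 / real q ^ 2) ^ t) \<le> 2 * (1 / real q ^ 2) ^ T0" by (intro geom_bound) auto
    thus ?thesis using n0 by (intro mult_left_mono) auto
  qed
  also have "\<dots> = 2 * real n * real q ^ n / real q ^ (2 * T0)" by (simp add: power_mult power_divide)
  also have "\<dots> \<le> 2 * real n * real q ^ n / (real n * log q n / real q ^ 2)"
  proof -
    have "real q ^ (2 * T0) \<ge> real n * log q n / real q ^ 2" unfolding T0_def thr_def by (rule pow_T0[OF q u])
    moreover have "real n * log q n / real q ^ 2 > 0" using n0 u q1 by simp
    moreover have "real q ^ (2 * T0) > 0" using q1 by simp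
    ultimately have pos: "0 < real q ^ (2 * T0) * (real n * log q n / real q ^ 2)" by (intro mult_pos_pos) auto
    have "0 \<le> 2 * real n * real q ^ n" by simp
    from divide_left_mono[OF \<open>real q ^ (2 * T0) \<ge> _\<close> this pos] show ?thesis .
  qed
  also have "\<dots> = 2 * real q ^ 2 * real q ^ n / log q n" using n0 u by (simp add: field_simps)
  finally show ?thesis .
qed

lemma u_top:
  assumes q: "q \<ge> (2::nat)"
  shows "filterlim (\<lambda>n::nat. log q (real n)) at_top sequentially"
proof -
  have lnq: "ln (real q) > 0" using q by simp
  have lnlim: "filterlim (\<lambda>n::nat. ln (real n)) at_top sequentially"
    by (rule filterlim_compose[OF ln_at_top filterlim_real_sequentially])
  have "filterlim (\<lambda>n::nat. (1 / ln (real q)) * ln (real n)) at_top sequentially"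
    by (rule filterlim_tendsto_pos_mult_at_top[OF tendsto_const _ lnlim]) (use lnq in simp)
  thus ?thesis unfolding log_def by (simp add: field_simps)
qed

lemma lnu_over_u:
  assumes q: "q \<ge> (2::nat)"
  shows "(\<lambda>n::nat. log q (log q (real n)) / log q (real n)) \<longlonglongrightarrow> 0"
proof -
  have "(\<lambda>n::nat. ln (log q (real n)) / log q (real n)) \<longlonglongrightarrow> 0"
    by (rule filterlim_compose[OF ln_x_over_x_tendsto_0 u_top[OF q]])
  hence "(\<lambda>n::nat. (ln (log q (real n)) / log q (real n)) / ln q) \<longlonglongrightarrow> 0 / ln q"
    by (intro tendsto_divide tendsto_const) (use q in auto)
  thus ?thesis unfolding log_def[of q "log q _"] by (simp add: field_simps)
qed

lemma part3:
  assumes q: "q \<ge> (2::nat)"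
  shows "(\<lambda>n. log q (Pval q n) - (log q (log q n) - log q 2)) \<longlonglongrightarrow> 0"
proof -
  define u where "u n = log q (real n)" for n :: nat
  have ut: "filterlim u at_top sequentially" unfolding u_def by (rule u_top[OF q])
  have g0: "(\<lambda>n. log q (u n) / u n) \<longlonglongrightarrow> 0" unfolding u_def by (rule lnu_over_u[OF q])
  have i0: "(\<lambda>n. inverse (u n)) \<longlonglongrightarrow> 0" by (rule tendsto_inverse_0_at_top[OF ut])
  have ev: "\<forall>\<^sub>F n in sequentially. u n > q" using ut by (simp add: filterlim_at_top_dense)
  have lo: "(\<lambda>n. 1 + log q (u n) / u n) \<longlonglongrightarrow> 1" using tendsto_add[OF tendsto_const g0] by simp
  have hi: "(\<lambda>n. 1 + log q (u n) / u n + 2 * inverse (u n)) \<longlonglongrightarrow> 1"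
    using tendsto_add[OF lo tendsto_mult[OF tendsto_const i0, of 2]] by simp
  have bounds: "\<forall>\<^sub>F n in sequentially. 1 + log q (u n) / u n \<le> 2 * Pval q n / u n \<and>
        2 * Pval q n / u n \<le> 1 + log q (u n) / u n + 2 * inverse (u n)"
    using ev
  proof eventually_elim
    case (elim n)
    have up: "u n > 0" using elim q by linarith
    define v where "v = (u n + log q (u n)) / 2"
    have P: "Pval q n = \<lceil>v\<rceil>" unfolding Pval_def v_def u_def by simp
    have "v \<le> of_int (Pval q n)" "of_int (Pval q n) \<le> v + 1" unfolding P by linarith+
    hence "2 * v / u n \<le> 2 * Pval q n / u n" "2 * Pval q n / u n \<le> 2 * (v + 1) / u n"
      using up by (simp_all add: divide_right_mono)
    moreover have "2 * v / u n = 1 + log q (u n) / u n" unfolding v_def using up by (simp add: field_simps)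
    moreover have "2 * (v + 1) / u n = 1 + log q (u n) / u n + 2 * inverse (u n)"
      unfolding v_def using up by (simp add: field_simps)
    ultimately show ?case by simp
  qed
  have r1: "(\<lambda>n. 2 * Pval q n / u n) \<longlonglongrightarrow> 1"
    by (rule tendsto_sandwich[OF _ _ lo hi]) (use bounds in \<open>auto elim: eventually_mono\<close>)
  have "(\<lambda>n. log q (2 * Pval q n / u n)) \<longlonglongrightarrow> log q 1"
    by (rule tendsto_log[OF tendsto_const r1]) (use q in auto)
  hence l0: "(\<lambda>n. log q (2 * Pval q n / u n)) \<longlonglongrightarrow> 0" by simp
  have "\<forall>\<^sub>F n in sequentially. log q (2 * Pval q n / u n) = log q (Pval q n) - (log q (log q n) - log q 2)"
    using ev
  proof eventually_elim
    case (elim n)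
    have up: "u n > 1" using elim q by linarith
    have lp: "log q (u n) > 0" using up q by simp
    have "real_of_int (Pval q n) \<ge> (u n + log q (u n)) / 2" unfolding Pval_def u_def by linarith
    moreover have "(u n + log q (u n)) / 2 > 0" using up lp by simp
    ultimately have Pp: "real_of_int (Pval q n) > 0" by linarith
    have "log q (2 * Pval q n / u n) = log q 2 + log q (Pval q n) - log q (u n)"
      using Pp up q by (simp add: log_mult log_divide)
    thus ?case unfolding u_def by simp
  qed
  from tendsto_cong[OF this] l0 show ?thesis by simp
qed

lemma part2:
  assumes q: "q \<ge> (2::nat)" and l: "l \<ge> 3"
  shows "\<exists>f :: nat \<Rightarrow> real. f \<longlonglongrightarrow> 0 \<and>
            (\<forall>\<^sub>F n in sequentially. \<exists>a. 0 \<le> a \<and> a \<le> Pval q n - 1 \<and>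
               redundancy q n (code_C q l n a) \<le> log q (Pval q n) + f n)"
proof -
  define c where "c = 2 * real q ^ 2"
  define u where "u n = log q (real n)" for n :: nat
  define f where "f n = - log q (1 - c / u n)" for n
  have q1: "real q > 1" using q by simp
  have c0: "c > 0" unfolding c_def using q1 by simp
  have ut: "filterlim u at_top sequentially" unfolding u_def by (rule u_top[OF q])
  have "(\<lambda>n. c * inverse (u n)) \<longlonglongrightarrow> c * 0"
    by (intro tendsto_mult tendsto_const tendsto_inverse_0_at_top[OF ut])
  hence "(\<lambda>n. 1 - c / u n) \<longlonglongrightarrow> 1 - 0" by (intro tendsto_diff tendsto_const) (simp add: divide_inverse)
  hence "(\<lambda>n. log q (1 - c / u n)) \<longlonglongrightarrow> log q 1" by (intro tendsto_log tendsto_const) (use q1 in auto)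
  hence "(\<lambda>n. - log q (1 - c / u n)) \<longlonglongrightarrow> - 0" by (intro tendsto_minus) simp
  hence f0: "f \<longlonglongrightarrow> 0" unfolding f_def by simp
  have ev: "\<forall>\<^sub>F n in sequentially. u n > 2 * c + q" using ut by (simp add: filterlim_at_top_dense)
  have main: "\<forall>\<^sub>F n in sequentially. \<exists>a. 0 \<le> a \<and> a \<le> Pval q n - 1 \<and>
               redundancy q n (code_C q l n a) \<le> log q (Pval q n) + f n"
    using ev
  proof eventually_elim
    case (elim n)
    have uc: "u n > 2 * c" "u n > q" using elim q1 c0 by linarith+
    have up: "u n > 0" using uc c0 by linarith
    have lu: "log q (u n) > 0" using uc q1 by simp
    define P where "P = Pval q n"
    have "real_of_int P \<ge> (u n + log q (u n)) / 2" unfolding P_def Pval_def u_def by linarith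
    moreover have "(u n + log q (u n)) / 2 > 0" using up lu by simp
    ultimately have Ppos: "real_of_int P > 0" by linarith
    hence P1: "P \<ge> 1" by simp
    define G where "G = {xs \<in> words q n. good q l xs}"
    define Bd where "Bd = {xs \<in> words q n. \<not> good q l xs}"
    have finW: "finite (words q n)" unfolding words_def using finite_lists_length_eq[of "{..<q}" n]
      by (simp add: conj_commute)
    have cw: "card (words q n) = q ^ n" unfolding words_def using card_lists_length_eq[of "{..<q}" n]
      by (simp add: conj_commute)
    have "card G + card Bd = card (words q n)"
    proof -
      have "G \<union> Bd = words q n" "G \<inter> Bd = {}" unfolding G_def Bd_def by auto
      thus ?thesis using finW by (metis card_Un_disjoint finite_Un)
    qed
    hence cG: "real (card G) = real q ^ n - real (card Bd)" using cw by (metis add_diff_cancel_right' of_nat_add of_nat_power diff_add_cancel)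
    have cB: "real (card Bd) \<le> c * real q ^ n / u n" unfolding Bd_def c_def u_def
      using bad_bound[OF q _ up[unfolded u_def], of l] l by simp
    have Glow: "real (card G) \<ge> real q ^ n * (1 - c / u n)" using cG cB by (simp add: algebra_simps)
    have pos1: "1 - c / u n > 0" using uc up c0 by (simp add: divide_less_eq)
    define C where "C a = code_C q l n a" for a
    have Gsub: "G \<subseteq> (\<Union>a\<in>{0..P-1}. C a)"
    proof
      fix xs assume xs: "xs \<in> G"
      define a where "a = int (Inv xs) mod P"
      have "a \<in> {0..P-1}" unfolding a_def using P1 by (simp add: pos_mod_bound pos_mod_sign)
      moreover have "xs \<in> C a" using xs unfolding C_def code_C_def G_def a_def P_def by simp
      ultimately show "xs \<in> (\<Union>a\<in>{0..P-1}. C a)" by blast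
    qed
    have "card G \<le> card (\<Union>a\<in>{0..P-1}. C a)"
      by (rule card_mono[OF _ Gsub]) (auto simp: C_def code_C_def intro!: finite_subset[OF _ finW])
    also have "\<dots> \<le> (\<Sum>a\<in>{0..P-1}. card (C a))" by (rule card_UN_le) simp
    finally have GS: "real (card G) \<le> (\<Sum>a\<in>{0..P-1}. real (card (C a)))"
      by (metis of_nat_le_iff of_nat_sum)
    have "\<exists>a\<in>{0..P-1}. real (card (C a)) \<ge> real (card G) / real_of_int P"
    proof (rule ccontr)
      assume "\<not> ?thesis"
      hence lt: "\<forall>a\<in>{0..P-1}. real (card (C a)) < real (card G) / real_of_int P" by auto
      have "(\<Sum>a\<in>{0..P-1}. real (card (C a))) < (\<Sum>a\<in>{0..P-1}. real (card G) / real_of_int P)"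
        using P1 lt by (intro sum_strict_mono) auto
      also have "\<dots> = real (card G)" using P1 Ppos by (simp add: card_atLeastAtMost_int)
      finally show False using GS by simp
    qed
    then obtain a where a: "a \<in> {0..P-1}" and ca: "real (card (C a)) \<ge> real (card G) / real_of_int P" by blast
    have lowC: "real (card (C a)) \<ge> real q ^ n * (1 - c / u n) / real_of_int P"
      using ca Glow Ppos by (meson divide_right_mono less_imp_le order_trans)
    have posL: "real q ^ n * (1 - c / u n) / real_of_int P > 0" using pos1 Ppos q1 by simp
    have "log q (real q ^ n * (1 - c / u n) / real_of_int P) \<le> log q (real (card (C a)))"
      using lowC posL q1 by (subst log_le_cancel_iff) auto
    moreover have "log q (real q ^ n * (1 - c / u n) / real_of_int P) = real n + log q (1 - c / u n) - log q P"
    proof -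
      have A: "real q ^ n * (1 - c / u n) \<noteq> 0" "real_of_int P \<noteq> 0" "real q ^ n \<noteq> 0" "1 - c / u n \<noteq> 0"
        using pos1 Ppos q1 by auto
      have "log q (real q ^ n * (1 - c / u n) / real_of_int P) = log q (real q ^ n * (1 - c / u n)) - log q P"
        using A by (simp only: log_divide if_True simp_thms)
      also have "\<dots> = log q (real q ^ n) + log q (1 - c / u n) - log q P"
        using A by (simp only: log_mult if_True simp_thms)
      also have "log q (real q ^ n) = real n" using q1 by (simp add: log_pow_cancel)
      finally show ?thesis .
    qed
    ultimately have "redundancy q n (C a) \<le> log q P + f n"
      unfolding redundancy_def f_def by simp
    thus ?case using a unfolding C_def P_def by auto
  qed
  show ?thesis using f0 main by blast
qed

theorem theorem4:
  fixes q l :: nat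
  assumes "q \<ge> 2" and "l \<ge> 3"
  shows "(\<forall>n a. n > 0 \<longrightarrow> 0 \<le> a \<longrightarrow> a \<le> Pval q n - 1 \<longrightarrow>
            is_read_code l q n 3 (code_C q l n a))
       \<and> (\<exists>f :: nat \<Rightarrow> real. f \<longlonglongrightarrow> 0 \<and>
            (\<forall>\<^sub>F n in sequentially. \<exists>a. 0 \<le> a \<and> a \<le> Pval q n - 1 \<and>
               redundancy q n (code_C q l n a) \<le> log q (Pval q n) + f n))
       \<and> (\<lambda>n. log q (Pval q n) - (log q (log q n) - log q 2)) \<longlonglongrightarrow> 0"
proof -
  have p1: "\<forall>n a. n > 0 \<longrightarrow> 0 \<le> a \<longrightarrow> a \<le> Pval q n - 1 \<longrightarrow> is_read_code l q n 3 (code_C q l n a)"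
  proof (intro allI impI)
    fix n :: nat and a :: int
    show "is_read_code l q n 3 (code_C q l n a)"
      unfolding is_read_code_def
    proof (intro conjI ballI impI)
      show "code_C q l n a \<subseteq> words q n" unfolding code_C_def by auto
    next
      fix x y assume x: "x \<in> code_C q l n a" and y: "y \<in> code_C q l n a" and ne: "x \<noteq> y"
      have lx: "length x = n" and ly: "length y = n" using x y unfolding code_C_def words_def by auto
      have g: "good q l x" using x unfolding code_C_def by auto
      have inv: "int (Inv x) mod Pval q n = int (Inv y) mod Pval q n" using x y unfolding code_C_def by auto
      show "3 \<le> hamming (read_vec l x) (read_vec l y)" by (rule dist3[OF assms(2) lx ly ne g inv])
    qed
  qed
  show ?thesis using p1 part2[OF assms] part3[OF assms(1)] by blast
qed

end
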